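(* Let $n\ge1$ and let $\mathbf{v},\mathbf{w}\in\{0,1\}^n$ be coordinates in multi-degree $\mathbf{1}_n$ of $\mathcal{L}^{\mathbb{Q}}_{T^n}(\mathbb{Q}[t];\mathbb{Q})$, and $x,y\in\mathbb{Q}[t]$. In the total complex $\mathrm{Tot}(\mathcal{L}^{\mathbb{Q}}_{T^n}(\mathbb{Q}[t];\mathbb{Q}))$: (1) If $\mathbf{v}$ and $\mathbf{w}$ are both $0$ in the $i$th place for some $1\le i\le n$, then $x_{\mathbf{v}}\cdot y_{\mathbf{w}}\sim0$. In particular, if $\mathbf{v}\neq\mathbf{1}_n$ then $x_{\mathbf{v}}\sim0$. (2) In general, \[x_{\mathbf{v}}\cdot y_{\mathbf{w}}\sim\sum_{\substack{\mathbf{v}'\le\mathbf{v},\ \mathbf{w}'\le\mathbf{w},\\ \mathbf{v}'+\mathbf{w}'=\mathbf{1}_n}}x_{\mathbf{v}'}\cdot y_{\mathbf{w}'},\] the sum over all pairs of coordinates $\mathbf{v}',\mathbf{w}'\in\{0,1\}^n$ that are place-wise no greater than $\mathbf{v}$, $\mathbf{w}$ respectively and take the value $1$ in complementary places. (3) For $k\ge1$, \[(t^k)_{\mathbf{1}_n}\sim\sum_{\substack{\mathbf{w}_1,\dots,\mathbf{w}_k\neq\mathbf{0}_n,\\ \mathbf{w}_1+\cdots+\mathbf{w}_k=\mathbf{1}_n}}\prod_{i=1}^kt_{\mathbf{w}_i},\] the sum over ordered $k$-tuples of nonzero coordinates in $\{0,1\}^n$. In particular, if $k=n$ and $\mathbf{e}_i$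 denotes the coordinate with $1$ in the $i$th place and $0$ elsewhere, then $(t^n)_{\mathbf{1}_n}\sim n!\prod_{i=1}^nt_{\mathbf{e}_i}$; and if $k>n$ then $(t^k)_{\mathbf{1}_n}\sim0$.
   Context: The $n$-chain complex $\mathcal{L}^{\mathbb{Q}}_{T^n}(\mathbb{Q}[t];\mathbb{Q})$ (Loday construction of $\mathbb{Q}[t]$ over the $n$-fold product of simplicial circles, with coefficients in $\mathbb{Q}$ via $t\mapsto0$): in multi-degree $\mathbf{V}\in\mathbb{N}^n$, elements are sums of multi-matrices of size $(v_1+1)\times\cdots\times(v_n+1)$ with entries in $\mathbb{Q}[t]$ at coordinates $\mathbf{v}\ne\mathbf{0}_n$ ($\mathbf{0}\le\mathbf{v}\le\mathbf{V}$) and in $\mathbb{Q}$ at $\mathbf{0}_n$ (tensors over $\mathbb{Q}$). In direction $i$ the slices are indexed by $j\in\{0,\dots,v_i\}$; $d_{i,j}$ ($j<v_i$) multiplies slices $j$ and $j+1$ entrywise, $d_{i,v_i}$ multiplies slice $v_i$ into slice $0$; $\mathrm{d}_i=\sum_j(-1)^jd_{i,j}$ and the total differential is $\mathrm{d}=\sum_i(-1)^{v_1+\cdots+v_{i-1}}\mathrm{d}_i$; $\sim$ means differing by a boundary. $\mathbf{0}_n,\mathbf{1}_n$ are constant vectors; for $x\in\mathbb{Q}[t]$, $x_{\mathbf{v}}$ is the multi-matrix with $x$ at $\mathbf{v}$ (its image in $\mathbb{Q}$ if $\mathbf{v}=\mathbf{0}_n$) and $1$ elsewhere, and products such as $x_{\mathbf{v}}\cdot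 y_{\mathbf{w}}$ or $\prod_it_{\mathbf{w}_i}$ are entrywise products of multi-matrices. Sums and inequalities of coordinates are place-wise. *)

theory Defs
  imports "HOL-Library.Poly_Mapping" "HOL-Computational_Algebra.Polynomial"
begin

text \<open>Coordinates are lists of naturals of length n.  By the Kuenneth iso, the degree-V part
  of the Loday construction (tensor product over Q of copies of Q[t] at the nonzero
  coordinates v <= V, and Q at 0) is the polynomial ring over Q in variables t_v,
  v a nonzero coordinate with v <= V.  A multi-matrix with entries f_v is the product
  of the f_v(t_v).\<close>

type_synonym mpoly = "(nat list \<Rightarrow>\<^sub>0 nat) \<Rightarrow>\<^sub>0 rat"

definition mconst :: "rat \<Rightarrow> mpoly" where
  "mconst c = Poly_Mapping.single 0 c"

definition mvar :: "nat list \<Rightarrow> mpoly" where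
  "mvar v = Poly_Mapping.single (Poly_Mapping.single v 1) 1"

definition vars :: "mpoly \<Rightarrow> nat list set" where
  "vars p = \<Union>((\<lambda>m::nat list \<Rightarrow>\<^sub>0 nat. Poly_Mapping.keys m) ` Poly_Mapping.keys p)"

definition msubst :: "(nat list \<Rightarrow> mpoly) \<Rightarrow> mpoly \<Rightarrow> mpoly" where
  "msubst \<sigma> p = (\<Sum>m\<in>Poly_Mapping.keys p. mconst (Poly_Mapping.lookup p m) * (\<Prod>v\<in>Poly_Mapping.keys m. \<sigma> v ^ Poly_Mapping.lookup m v))"

text \<open>Nonzero coordinates of multi-degree V (the variables of the degree-V group).\<close>
definition nzcoords :: "nat \<Rightarrow> nat list \<Rightarrow> nat list set" where
  "nzcoords n V = {v. length v = n \<and> (\<forall>k<n. v ! k \<le> V ! k) \<and> v \<noteq> replicate n 0}"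

text \<open>Effect of the face map d_{i,j} (in multi-degree V) on coordinates: for j < V_i slices
  j and j+1 are merged, for j = V_i slice V_i is merged into slice 0.\<close>
definition face_coord :: "nat list \<Rightarrow> nat \<Rightarrow> nat \<Rightarrow> nat list \<Rightarrow> nat list" where
  "face_coord V i j v = v[i := (if j < V ! i then (if v ! i \<le> j then v ! i else v ! i - 1)
                                 else (if v ! i = V ! i then 0 else v ! i))]"

text \<open>Face map d_{i,j}: entries are multiplied together; entries landing at coordinate 0
  are mapped to Q via t \<mapsto> 0.\<close>
definition face :: "nat list \<Rightarrow> nat \<Rightarrow> nat \<Rightarrow> mpoly \<Rightarrow> mpoly" where
  "face V i j = msubst (\<lambda>v. let w = face_coord V i j v in
                              if w = replicate (length w) 0 then 0 else mvar w)"

definition dir_d :: "nat list \<Rightarrow> nat \<Rightarrow> mpoly \<Rightarrow> mpoly" where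
  "dir_d V i p = (\<Sum>j\<le>V ! i. (-1) ^ j * face V i j p)"

text \<open>Chains of the total complex: functions from multi-degrees to polynomials; the total
  differential, evaluated at a target multi-degree V'.\<close>
definition tot_d :: "nat \<Rightarrow> (nat list \<Rightarrow> mpoly) \<Rightarrow> nat list \<Rightarrow> mpoly" where
  "tot_d n c V' = (\<Sum>i<n. (-1) ^ sum_list (take i V') *
       (let V = V'[i := Suc (V' ! i)] in dir_d V i (c V)))"

definition is_boundary :: "nat \<Rightarrow> nat \<Rightarrow> (nat list \<Rightarrow> mpoly) \<Rightarrow> bool" where
  "is_boundary n m z \<longleftrightarrow> (\<exists>c.
     (\<forall>V. length V = n \<and> sum_list V = Suc m \<longrightarrow> vars (c V) \<subseteq> nzcoords n V) \<and>
     (\<forall>V. length V = n \<and> sum_list V = m \<longrightarrow> z V = tot_d n c V))"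

definition ones :: "nat \<Rightarrow> nat list" where
  "ones n = replicate n 1"

definition sim1 :: "nat \<Rightarrow> mpoly \<Rightarrow> mpoly \<Rightarrow> bool" where
  "sim1 n a b \<longleftrightarrow> is_boundary n n (\<lambda>V. if V = ones n then a - b else 0)"

text \<open>x_v for x in Q[t]: x at v, 1 elsewhere; at v = 0 its image x(0) in Q.\<close>
definition entry :: "nat \<Rightarrow> nat list \<Rightarrow> rat poly \<Rightarrow> mpoly" where
  "entry n v x = (if v = replicate n 0 then mconst (poly x 0)
                  else (\<Sum>k\<le>degree x. mconst (coeff x k) * mvar v ^ k))"

definition bincoords :: "nat \<Rightarrow> nat list set" where
  "bincoords n = {v. length v = n \<and> set v \<subseteq> {0, 1}}"

definition unit_coord :: "nat \<Rightarrow> nat \<Rightarrow> nat list" where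
  "unit_coord n i = (replicate n 0)[i := 1]"

definition vsum :: "nat \<Rightarrow> nat list list \<Rightarrow> nat list" where
  "vsum n ws = map (\<lambda>i. \<Sum>w\<leftarrow>ws. w ! i) [0..<n]"

end

theory Submission
  imports Defs "HOL-Combinatorics.Multiset_Permutations"
begin


section \<open>Algebra of msubst\<close>

lemma mconst_0[simp]: "mconst 0 = 0" by (simp add: mconst_def)
lemma mconst_1[simp]: "mconst 1 = 1" by (simp add: mconst_def)
lemma mconst_add: "mconst (a + b) = mconst a + mconst b" by (simp add: mconst_def single_add)
lemma mconst_mult: "mconst (a * b) = mconst a * mconst b" by (simp add: mconst_def mult_single)

definition mmon :: "(nat list \<Rightarrow> mpoly) \<Rightarrow> (nat list \<Rightarrow>\<^sub>0 nat) \<Rightarrow> mpoly" where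
  "mmon \<sigma> m = (\<Prod>v\<in>Poly_Mapping.keys m. \<sigma> v ^ Poly_Mapping.lookup m v)"

lemma mmon_superset:
  assumes "finite A" "Poly_Mapping.keys m \<subseteq> A"
  shows "mmon \<sigma> m = (\<Prod>v\<in>A. \<sigma> v ^ Poly_Mapping.lookup m v)"
  unfolding mmon_def
  by (rule prod.mono_neutral_left) (use assms in \<open>auto simp: in_keys_iff\<close>)

lemma keys_add_nat: "Poly_Mapping.keys (a + b :: nat list \<Rightarrow>\<^sub>0 nat) = Poly_Mapping.keys a \<union> Poly_Mapping.keys b"
  by (auto simp: in_keys_iff lookup_add)

lemma mmon_add: "mmon \<sigma> (a + b) = mmon \<sigma> a * mmon \<sigma> b"
proof -
  let ?A = "Poly_Mapping.keys a \<union> Poly_Mapping.keys b"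
  have "mmon \<sigma> (a + b) = (\<Prod>v\<in>?A. \<sigma> v ^ Poly_Mapping.lookup (a+b) v)"
    by (rule mmon_superset) (auto simp: keys_add_nat)
  also have "\<dots> = (\<Prod>v\<in>?A. \<sigma> v ^ Poly_Mapping.lookup a v) * (\<Prod>v\<in>?A. \<sigma> v ^ Poly_Mapping.lookup b v)"
    by (simp add: lookup_add power_add prod.distrib)
  also have "\<dots> = mmon \<sigma> a * mmon \<sigma> b"
    using mmon_superset[where A="?A" and m=a and \<sigma>=\<sigma>] mmon_superset[where A="?A" and m=b and \<sigma>=\<sigma>] by simp
  finally show ?thesis .
qed

lemma mmon_0[simp]: "mmon \<sigma> 0 = 1" by (simp add: mmon_def)

lemma msubst_mmon: "msubst \<sigma> p = (\<Sum>m\<in>Poly_Mapping.keys p. mconst (Poly_Mapping.lookup p m) * mmon \<sigma> m)"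
  by (simp add: msubst_def mmon_def)

lemma msubst_superset:
  assumes "finite A" "Poly_Mapping.keys p \<subseteq> A"
  shows "msubst \<sigma> p = (\<Sum>m\<in>A. mconst (Poly_Mapping.lookup p m) * mmon \<sigma> m)"
  unfolding msubst_mmon
  by (rule sum.mono_neutral_left) (use assms in \<open>auto simp: in_keys_iff\<close>)

lemma msubst_add: "msubst \<sigma> (p + q) = msubst \<sigma> p + msubst \<sigma> q"
proof -
  let ?A = "Poly_Mapping.keys p \<union> Poly_Mapping.keys q"
  have "msubst \<sigma> (p + q) = (\<Sum>m\<in>?A. mconst (Poly_Mapping.lookup (p+q) m) * mmon \<sigma> m)"
    by (rule msubst_superset) (auto dest: set_mp[OF keys_add])
  also have "\<dots> = msubst \<sigma> p + msubst \<sigma> q"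
    using msubst_superset[where A="?A" and p=p and \<sigma>=\<sigma>] msubst_superset[where A="?A" and p=q and \<sigma>=\<sigma>]
    by (simp add: lookup_add mconst_add distrib_right sum.distrib)
  finally show ?thesis .
qed

lemma msubst_0[simp]: "msubst \<sigma> 0 = 0" by (simp add: msubst_def)

lemma msubst_single: "msubst \<sigma> (Poly_Mapping.single m c) = mconst c * mmon \<sigma> m"
  by (subst msubst_superset[where A="{m}"]) (auto simp: lookup_single)

lemma msubst_sum: "msubst \<sigma> (sum f A) = (\<Sum>a\<in>A. msubst \<sigma> (f a))"
  by (induction A rule: infinite_finite_induct) (auto simp: msubst_add)

lemma mpoly_expand: "p = (\<Sum>m\<in>Poly_Mapping.keys p. Poly_Mapping.single m (Poly_Mapping.lookup p m))"
proof (rule poly_mapping_eqI)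
  fix k
  show "Poly_Mapping.lookup p k = Poly_Mapping.lookup (\<Sum>m\<in>Poly_Mapping.keys p. Poly_Mapping.single m (Poly_Mapping.lookup p m)) k"
    by (simp add: lookup_sum lookup_single when_def in_keys_iff)
qed

lemma msubst_mult: "msubst \<sigma> (p * q) = msubst \<sigma> p * msubst \<sigma> q"
proof -
  have "p * q = (\<Sum>a\<in>Poly_Mapping.keys p. Poly_Mapping.single a (Poly_Mapping.lookup p a)) *
                (\<Sum>b\<in>Poly_Mapping.keys q. Poly_Mapping.single b (Poly_Mapping.lookup q b))"
    by (metis mpoly_expand)
  also have "\<dots> = (\<Sum>a\<in>Poly_Mapping.keys p. \<Sum>b\<in>Poly_Mapping.keys q.
      Poly_Mapping.single (a + b) (Poly_Mapping.lookup p a * Poly_Mapping.lookup q b))"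
    by (simp add: sum_product mult_single)
  finally have "msubst \<sigma> (p * q) = (\<Sum>a\<in>Poly_Mapping.keys p. \<Sum>b\<in>Poly_Mapping.keys q.
      (mconst (Poly_Mapping.lookup p a) * mmon \<sigma> a) * (mconst (Poly_Mapping.lookup q b) * mmon \<sigma> b))"
    by (simp add: msubst_sum msubst_single mconst_mult mmon_add mult_ac)
  also have "\<dots> = msubst \<sigma> p * msubst \<sigma> q"
    by (simp add: msubst_mmon sum_product)
  finally show ?thesis .
qed

lemma msubst_mconst[simp]: "msubst \<sigma> (mconst c) = mconst c"
  by (simp add: mconst_def msubst_single)

lemma msubst_1[simp]: "msubst \<sigma> 1 = 1"
  using msubst_mconst[of \<sigma> 1] by simp

lemma msubst_mvar[simp]: "msubst \<sigma> (mvar v) = \<sigma> v"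
  by (simp add: mvar_def msubst_single mmon_def)

lemma msubst_uminus: "msubst \<sigma> (- p) = - msubst \<sigma> p"
  by (metis add_eq_0_iff2 msubst_0 msubst_add neg_eq_iff_add_eq_0)

lemma msubst_diff: "msubst \<sigma> (p - q) = msubst \<sigma> p - msubst \<sigma> q"
  by (metis diff_conv_add_uminus msubst_add msubst_uminus)

lemma msubst_power: "msubst \<sigma> (p ^ k) = msubst \<sigma> p ^ k"
  by (induction k) (auto simp: msubst_mult)

lemma msubst_prod: "msubst \<sigma> (prod f A) = (\<Prod>a\<in>A. msubst \<sigma> (f a))"
  by (induction A rule: infinite_finite_induct) (auto simp: msubst_mult)

lemma msubst_prod_list: "msubst \<sigma> (prod_list xs) = prod_list (map (msubst \<sigma>) xs)"
  by (induction xs) (auto simp: msubst_mult)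

lemma msubst_neg1_power: "msubst \<sigma> ((-1) ^ k) = (-1) ^ k"
  by (simp add: msubst_power msubst_uminus)

lemma vars_add: "vars (p + q) \<subseteq> vars p \<union> vars q"
  unfolding vars_def using keys_add[of p q] by auto

lemma vars_mult: "vars (p * q) \<subseteq> vars p \<union> vars q"
proof
  fix v assume "v \<in> vars (p * q)"
  then obtain m where m: "m \<in> Poly_Mapping.keys (p * q)" "v \<in> Poly_Mapping.keys m" by (auto simp: vars_def)
  from m(1) keys_mult[of p q] obtain a b where "m = a + b" "a \<in> Poly_Mapping.keys p" "b \<in> Poly_Mapping.keys q" by blast
  with m(2) show "v \<in> vars p \<union> vars q" by (auto simp: vars_def keys_add_nat)
qed

lemma vars_uminus[simp]: "vars (- p) = vars p"
  by (simp add: vars_def)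

lemma vars_mconst[simp]: "vars (mconst c) = {}"
  by (simp add: vars_def mconst_def)

lemma vars_0[simp]: "vars 0 = {}" by (simp add: vars_def)
lemma vars_1[simp]: "vars 1 = {}" using vars_mconst[of 1] by simp

lemma vars_mvar[simp]: "vars (mvar v) = {v}"
  by (simp add: vars_def mvar_def)

lemma vars_diff: "vars (p - q) \<subseteq> vars p \<union> vars q"
  using vars_add[of p "-q"] by simp

lemma vars_sum: "vars (sum f A) \<subseteq> (\<Union>a\<in>A. vars (f a))"
  by (induction A rule: infinite_finite_induct) (use vars_add in fastforce)+

lemma vars_prod: "vars (prod f A) \<subseteq> (\<Union>a\<in>A. vars (f a))"
  by (induction A rule: infinite_finite_induct) (use vars_mult in fastforce)+

lemma vars_power: "vars (p ^ k) \<subseteq> vars p"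
  by (induction k) (use vars_mult in fastforce)+

lemma vars_prod_list: "vars (prod_list xs) \<subseteq> (\<Union>x\<in>set xs. vars x)"
  by (induction xs) (use vars_mult in fastforce)+

lemma vars_msubst: "vars (msubst \<sigma> p) \<subseteq> (\<Union>v\<in>vars p. vars (\<sigma> v))"
proof -
  have "vars (msubst \<sigma> p) \<subseteq> (\<Union>m\<in>Poly_Mapping.keys p. vars (mconst (Poly_Mapping.lookup p m) * mmon \<sigma> m))"
    unfolding msubst_mmon by (rule vars_sum)
  also have "\<dots> \<subseteq> (\<Union>v\<in>vars p. vars (\<sigma> v))"
  proof (rule UN_least)
    fix m assume m: "m \<in> Poly_Mapping.keys p"
    have "vars (mconst (Poly_Mapping.lookup p m) * mmon \<sigma> m) \<subseteq> vars (mmon \<sigma> m)"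
      using vars_mult by fastforce
    also have "\<dots> \<subseteq> (\<Union>v\<in>Poly_Mapping.keys m. vars (\<sigma> v ^ Poly_Mapping.lookup m v))"
      unfolding mmon_def by (rule vars_prod)
    also have "\<dots> \<subseteq> (\<Union>v\<in>Poly_Mapping.keys m. vars (\<sigma> v))"
      using vars_power by blast
    also have "\<dots> \<subseteq> (\<Union>v\<in>vars p. vars (\<sigma> v))"
      using m by (auto simp: vars_def)
    finally show "vars (mconst (Poly_Mapping.lookup p m) * mmon \<sigma> m) \<subseteq> (\<Union>v\<in>vars p. vars (\<sigma> v))" .
  qed
  finally show ?thesis .
qed

lemma msubst_cong:
  assumes "\<And>v. v \<in> vars p \<Longrightarrow> \<sigma> v = \<tau> v"
  shows "msubst \<sigma> p = msubst \<tau> p"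
proof -
  have "\<sigma> v ^ Poly_Mapping.lookup m v = \<tau> v ^ Poly_Mapping.lookup m v"
    if "m \<in> Poly_Mapping.keys p" "v \<in> Poly_Mapping.keys m" for m v
  proof -
    have "v \<in> vars p" using that by (auto simp: vars_def)
    then show ?thesis using assms by simp
  qed
  then show ?thesis unfolding msubst_def
    by (intro sum.cong refl arg_cong2[where f="(*)"] prod.cong) auto
qed

lemma mvar_power: "mvar v ^ k = Poly_Mapping.single (Poly_Mapping.single v k) 1"
proof (induction k)
  case (Suc k)
  then show ?case by (simp add: mvar_def mult_single single_add[symmetric])
qed simp

lemma prod_single_1: "finite K \<Longrightarrow> (\<Prod>v\<in>K. Poly_Mapping.single (f v) (1::rat)) = Poly_Mapping.single (\<Sum>v\<in>K. f v) 1"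
  by (induction K rule: finite_induct) (auto simp: mult_single)

lemma mmon_mvar: "mmon mvar m = Poly_Mapping.single m 1"
proof -
  have "mmon mvar m = (\<Prod>v\<in>Poly_Mapping.keys m. Poly_Mapping.single (Poly_Mapping.single v (Poly_Mapping.lookup m v)) 1)"
    by (simp add: mmon_def mvar_power)
  also have "\<dots> = Poly_Mapping.single m 1"
    by (simp add: prod_single_1 mpoly_expand[of m, symmetric])
  finally show ?thesis .
qed

lemma msubst_id: "msubst mvar p = p"
proof -
  have "msubst mvar p = (\<Sum>m\<in>Poly_Mapping.keys p. Poly_Mapping.single m (Poly_Mapping.lookup p m))"
    by (simp add: msubst_mmon mmon_mvar mconst_def mult_single)
  then show ?thesis by (metis mpoly_expand)
qed

lemma msubst_comp: "msubst \<sigma> (msubst \<tau> p) = msubst (\<lambda>v. msubst \<sigma> (\<tau> v)) p"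
proof -
  have 1: "msubst \<sigma> (mmon \<tau> m) = mmon (\<lambda>v. msubst \<sigma> (\<tau> v)) m" for m
    by (simp add: mmon_def msubst_prod msubst_power)
  show ?thesis
    by (subst (2) msubst_mmon, subst msubst_mmon) (simp add: msubst_sum msubst_mult 1)
qed

lemma msubst_comp_cong:
  assumes "\<And>v. v \<in> vars p \<Longrightarrow> msubst \<sigma> (\<tau> v) = \<rho> v"
  shows "msubst \<sigma> (msubst \<tau> p) = msubst \<rho> p"
  unfolding msubst_comp by (rule msubst_cong) (use assms in auto)

section \<open>Linearity of the boundary relation\<close>

lemma face_add: "face V i j (p + q) = face V i j p + face V i j q"
  by (simp add: face_def msubst_add)
lemma face_uminus: "face V i j (- p) = - face V i j p"
  by (simp add: face_def msubst_uminus)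
lemma face_mult: "face V i j (p * q) = face V i j p * face V i j q"
  by (simp add: face_def msubst_mult)
lemma face_0[simp]: "face V i j 0 = 0"
  by (simp add: face_def)

lemma dir_d_add: "dir_d V i (p + q) = dir_d V i p + dir_d V i q"
  by (simp add: dir_d_def face_add distrib_left sum.distrib)
lemma dir_d_uminus: "dir_d V i (- p) = - dir_d V i p"
  by (simp add: dir_d_def face_uminus sum_negf)
lemma dir_d_0[simp]: "dir_d V i 0 = 0"
  by (simp add: dir_d_def)

lemma tot_d_add: "tot_d n (\<lambda>V. c1 V + c2 V) V' = tot_d n c1 V' + tot_d n c2 V'"
  by (simp add: tot_d_def Let_def dir_d_add distrib_left sum.distrib)
lemma tot_d_uminus: "tot_d n (\<lambda>V. - c V) V' = - tot_d n c V'"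
  by (simp add: tot_d_def Let_def dir_d_uminus sum_negf)
lemma tot_d_0: "tot_d n (\<lambda>V. 0) V' = 0"
  by (simp add: tot_d_def)

lemma is_boundary_add:
  assumes "is_boundary n m z1" "is_boundary n m z2"
  shows "is_boundary n m (\<lambda>V. z1 V + z2 V)"
proof -
  obtain c1 where c1: "\<forall>V. length V = n \<and> sum_list V = Suc m \<longrightarrow> vars (c1 V) \<subseteq> nzcoords n V"
     "\<forall>V. length V = n \<and> sum_list V = m \<longrightarrow> z1 V = tot_d n c1 V"
    using assms(1) unfolding is_boundary_def by blast
  obtain c2 where c2: "\<forall>V. length V = n \<and> sum_list V = Suc m \<longrightarrow> vars (c2 V) \<subseteq> nzcoords n V"
     "\<forall>V. length V = n \<and> sum_list V = m \<longrightarrow> z2 V = tot_d n c2 V"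
    using assms(2) unfolding is_boundary_def by blast
  show ?thesis unfolding is_boundary_def
    apply (rule exI[of _ "\<lambda>V. c1 V + c2 V"])
    using c1 c2 vars_add by (auto simp: tot_d_add) blast+
qed

lemma is_boundary_uminus:
  assumes "is_boundary n m z"
  shows "is_boundary n m (\<lambda>V. - z V)"
proof -
  obtain c where c: "\<forall>V. length V = n \<and> sum_list V = Suc m \<longrightarrow> vars (c V) \<subseteq> nzcoords n V"
     "\<forall>V. length V = n \<and> sum_list V = m \<longrightarrow> z V = tot_d n c V"
    using assms(1) unfolding is_boundary_def by blast
  show ?thesis unfolding is_boundary_def
    by (rule exI[of _ "\<lambda>V. - c V"]) (use c in \<open>auto simp: tot_d_uminus\<close>)
qed

lemma is_boundary_zero: "is_boundary n m (\<lambda>V. 0)"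
  unfolding is_boundary_def by (rule exI[of _ "\<lambda>V. 0"]) (simp add: tot_d_0)

lemma is_boundary_cong: "is_boundary n m z \<Longrightarrow> (\<And>V. z V = z' V) \<Longrightarrow> is_boundary n m z'"
proof -
  assume "is_boundary n m z" "\<And>V. z V = z' V"
  moreover have "z = z'" using calculation(2) by (rule ext)
  ultimately show ?thesis by simp
qed

lemma sim1_iff0: "sim1 n a b \<longleftrightarrow> sim1 n (a - b) 0"
  unfolding sim1_def by (simp only: diff_zero)

lemma sim1_refl: "sim1 n a a"
  unfolding sim1_def by (rule is_boundary_cong[OF is_boundary_zero]) simp

lemma sim1_add: "sim1 n a b \<Longrightarrow> sim1 n c d \<Longrightarrow> sim1 n (a + c) (b + d)"
  unfolding sim1_def
  by (drule (1) is_boundary_add, erule is_boundary_cong) auto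

lemma sim1_sym: "sim1 n a b \<Longrightarrow> sim1 n b a"
  unfolding sim1_def
  by (drule is_boundary_uminus, erule is_boundary_cong) auto

lemma sim1_trans: "sim1 n a b \<Longrightarrow> sim1 n b c \<Longrightarrow> sim1 n a c"
  unfolding sim1_def
  by (drule (1) is_boundary_add, erule is_boundary_cong) auto

lemma sim1_sum: "(\<And>x. x \<in> A \<Longrightarrow> sim1 n (f x) (g x)) \<Longrightarrow> sim1 n (sum f A) (sum g A)"
  by (induction A rule: infinite_finite_induct) (auto intro: sim1_refl sim1_add)

lemma sim1_eq_trans: "sim1 n a b \<Longrightarrow> b = c \<Longrightarrow> sim1 n a c" by simp

section \<open>The Hochschild relation in one direction\<close>

definition inR1 :: "nat \<Rightarrow> mpoly \<Rightarrow> bool" where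
  "inR1 n p \<longleftrightarrow> vars p \<subseteq> nzcoords n (ones n)"

definition V2 :: "nat \<Rightarrow> nat \<Rightarrow> nat list" where
  "V2 n i = (ones n)[i := 2]"

definition lift :: "nat \<Rightarrow> mpoly \<Rightarrow> mpoly" where
  "lift i p = msubst (\<lambda>v. if v ! i = 1 then mvar (v[i := 2]) else mvar v) p"

definition rsig :: "nat \<Rightarrow> nat \<Rightarrow> nat list \<Rightarrow> mpoly" where
  "rsig n i v = (if v[i := 0] = replicate n 0 then 0 else mvar (v[i := 0]))"

definition rho :: "nat \<Rightarrow> nat \<Rightarrow> mpoly \<Rightarrow> mpoly" where
  "rho n i p = msubst (rsig n i) p"

definition fsig :: "nat list \<Rightarrow> nat \<Rightarrow> nat \<Rightarrow> nat list \<Rightarrow> mpoly" where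
  "fsig V i j v = (let w = face_coord V i j v in if w = replicate (length w) 0 then 0 else mvar w)"

lemma face_fsig: "face V i j = msubst (fsig V i j)"
  unfolding face_def fsig_def ..

lemma nz1D:
  assumes "v \<in> nzcoords n (ones n)"
  shows "length v = n" "\<And>k. k < n \<Longrightarrow> v ! k \<le> 1" "v \<noteq> replicate n 0"
  using assms by (auto simp: nzcoords_def ones_def)

lemma V2_nth: "i < n \<Longrightarrow> k < n \<Longrightarrow> V2 n i ! k = (if k = i then 2 else 1)"
  by (simp add: V2_def ones_def nth_list_update)

lemma length_V2[simp]: "length (V2 n i) = n"
  by (simp add: V2_def ones_def)

lemma dir_d_one_zero:
  assumes "l < length V" "V ! l = 1" "vars X \<subseteq> nzcoords (length V) V"
  shows "dir_d V l X = 0"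
proof -
  have "face V l 0 X = face V l 1 X"
    unfolding face_fsig
  proof (rule msubst_cong)
    fix v assume "v \<in> vars X"
    then have "v \<in> nzcoords (length V) V" using assms(3) by blast
    then have "v ! l \<le> V ! l" using assms(1) by (simp add: nzcoords_def)
    then have "v ! l \<le> 1" using assms(2) by simp
    then have "face_coord V l 0 v = face_coord V l 1 v"
      using assms by (auto simp: face_coord_def)
    then show "fsig V l 0 v = fsig V l 1 v" by (simp add: fsig_def)
  qed
  then show ?thesis
    by (simp add: dir_d_def assms(2))
qed

lemma fsig_cases:
  assumes "v \<in> nzcoords n (ones n)" "i < n"
  shows "fsig (V2 n i) i 0 v = rsig n i v"
    "fsig (V2 n i) i 1 v = mvar v"
    "fsig (V2 n i) i 2 v = mvar v"
    "v ! i = 1 \<Longrightarrow> fsig (V2 n i) i 0 (v[i:=2]) = mvar v"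
    "v ! i = 1 \<Longrightarrow> fsig (V2 n i) i 1 (v[i:=2]) = mvar v"
    "v ! i = 1 \<Longrightarrow> fsig (V2 n i) i 2 (v[i:=2]) = rsig n i v"
proof -
  note d = nz1D[OF assms(1)]
  have V2i: "V2 n i ! i = 2" using assms by (simp add: V2_nth)
  have vi: "v ! i \<le> 1" using d assms by auto
  show "fsig (V2 n i) i 0 v = rsig n i v"
    using vi d by (auto simp: fsig_def face_coord_def V2i rsig_def)
  show "fsig (V2 n i) i 1 v = mvar v"
    using vi d by (auto simp: fsig_def face_coord_def V2i)
  show "fsig (V2 n i) i 2 v = mvar v"
    using vi d by (auto simp: fsig_def face_coord_def V2i)
  assume vi1: "v ! i = 1"
  then have upd: "v[i := 1] = v" by (metis list_update_id)
  show "fsig (V2 n i) i 0 (v[i:=2]) = mvar v"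
    using d assms upd by (auto simp: fsig_def face_coord_def V2i)
  show "fsig (V2 n i) i 1 (v[i:=2]) = mvar v"
    using d assms upd by (auto simp: fsig_def face_coord_def V2i)
  show "fsig (V2 n i) i 2 (v[i:=2]) = rsig n i v"
    using d assms by (auto simp: fsig_def face_coord_def V2i rsig_def)
qed

lemma rsig_fix:
  assumes "v \<in> nzcoords n (ones n)" "i < n" "v ! i \<noteq> 1"
  shows "rsig n i v = mvar v"
proof -
  note d = nz1D[OF assms(1)]
  have "v ! i = 0" using d(2)[OF assms(2)] assms(3) by linarith
  then have "v[i := 0] = v" by (metis list_update_id)
  then show ?thesis using d by (simp add: rsig_def)
qed

lemma faces_lift:
  assumes "inR1 n p" "i < n"
  shows "face (V2 n i) i 0 (lift i p) = p"
    "face (V2 n i) i 1 (lift i p) = p"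
    "face (V2 n i) i 2 (lift i p) = rho n i p"
proof -
  have vp: "v \<in> nzcoords n (ones n)" if "v \<in> vars p" for v
    using assms that by (auto simp: inR1_def)
  show "face (V2 n i) i 0 (lift i p) = p"
    unfolding face_fsig lift_def
    by (subst (2) msubst_id[symmetric], rule msubst_comp_cong) (use vp fsig_cases[OF _ assms(2)] rsig_fix[OF _ assms(2)] in auto)
  show "face (V2 n i) i 1 (lift i p) = p"
    unfolding face_fsig lift_def
    by (subst (2) msubst_id[symmetric], rule msubst_comp_cong) (use vp fsig_cases[OF _ assms(2)] rsig_fix[OF _ assms(2)] in auto)
  show "face (V2 n i) i 2 (lift i p) = rho n i p"
    unfolding face_fsig lift_def rho_def
    by (rule msubst_comp_cong) (use vp fsig_cases[OF _ assms(2)] rsig_fix[OF _ assms(2)] in auto)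
qed

lemma faces_plain:
  assumes "inR1 n q" "i < n"
  shows "face (V2 n i) i 0 q = rho n i q"
    "face (V2 n i) i 1 q = q"
    "face (V2 n i) i 2 q = q"
proof -
  have vp: "v \<in> nzcoords n (ones n)" if "v \<in> vars q" for v
    using assms that by (auto simp: inR1_def)
  show "face (V2 n i) i 0 q = rho n i q"
    unfolding face_fsig rho_def
    by (rule msubst_cong) (use vp fsig_cases[OF _ assms(2)] rsig_fix[OF _ assms(2)] in auto)
  show "face (V2 n i) i 1 q = q"
    unfolding face_fsig
    by (subst (2) msubst_id[symmetric], rule msubst_cong) (use vp fsig_cases[OF _ assms(2)] rsig_fix[OF _ assms(2)] in auto)
  show "face (V2 n i) i 2 q = q"
    unfolding face_fsig
    by (subst (2) msubst_id[symmetric], rule msubst_cong) (use vp fsig_cases[OF _ assms(2)] rsig_fix[OF _ assms(2)] in auto)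
qed

lemma dir_d_V2:
  assumes "inR1 n p" "inR1 n q" "i < n"
  shows "dir_d (V2 n i) i (lift i p * q) = p * rho n i q - p * q + rho n i p * q"
proof -
  have V2i: "V2 n i ! i = 2" using assms by (simp add: V2_nth)
  have "{..2::nat} = {0,1,2}" by auto
  then show ?thesis
    using faces_lift[OF assms(1,3)] faces_plain[OF assms(2,3)]
    by (simp add: dir_d_def V2i face_mult)
qed

lemma inR1_nz_V2:
  assumes "v \<in> nzcoords n (ones n)" "i < n"
  shows "v \<in> nzcoords n (V2 n i)"
proof -
  note d = nz1D[OF assms(1)]
  have "v ! k \<le> V2 n i ! k" if "k < n" for k
    using d(2)[OF that] that assms(2) by (cases "k = i") (auto simp: V2_nth)
  then show ?thesis using d unfolding nzcoords_def by blast
qed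

lemma upd2_nz:
  assumes "v \<in> nzcoords n (ones n)" "i < n"
  shows "v[i := 2] \<in> nzcoords n (V2 n i)"
proof -
  note d = nz1D[OF assms(1)]
  have len: "length (v[i := 2]) = n" using d by simp
  have le: "v[i := 2] ! k \<le> V2 n i ! k" if "k < n" for k
  proof (cases "k = i")
    case True then show ?thesis using d(1) assms(2) by (simp add: V2_nth)
  next
    case False then show ?thesis using d(2)[OF that] that assms(2) by (simp add: V2_nth)
  qed
  have "v[i := 2] ! i = 2" using d(1) assms(2) by simp
  then have "v[i := 2] \<noteq> replicate n 0" using assms(2) by (auto simp del: nth_list_update_eq)
  then show ?thesis using len le unfolding nzcoords_def by blast
qed

lemma vars_lift:
  assumes "inR1 n p" "i < n"
  shows "vars (lift i p) \<subseteq> nzcoords n (V2 n i)"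
proof -
  have "vars (lift i p) \<subseteq> (\<Union>v\<in>vars p. vars (if v ! i = 1 then mvar (v[i := 2]) else mvar v))"
    unfolding lift_def by (rule vars_msubst)
  also have "\<dots> \<subseteq> nzcoords n (V2 n i)"
  proof (rule UN_least)
    fix v assume "v \<in> vars p"
    then have v: "v \<in> nzcoords n (ones n)" using assms by (auto simp: inR1_def)
    show "vars (if v ! i = 1 then mvar (v[i := 2]) else mvar v) \<subseteq> nzcoords n (V2 n i)"
      using inR1_nz_V2[OF v assms(2)] upd2_nz[OF v assms(2)] by simp
  qed
  finally show ?thesis .
qed

lemma neg1_sq: "((-1::mpoly) ^ i) * (-1) ^ i = 1"
  by (induction i) auto

lemma sum_take_ones: "i \<le> n \<Longrightarrow> sum_list (take i (ones n)) = i"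
  by (simp add: ones_def sum_list_replicate)

lemma face_scale: "face V l j (- ((-1) ^ i * X)) = - ((-1) ^ i * face V l j X)"
  by (simp only: face_uminus face_mult) (simp add: face_fsig msubst_neg1_power)

lemma dir_d_scale: "dir_d V l (- ((-1) ^ i * X)) = - ((-1) ^ i * dir_d V l X)"
  unfolding dir_d_def face_scale by (simp add: sum_negf sum_distrib_left mult.left_commute)

lemma hoch:
  assumes "inR1 n p" "inR1 n q" "i < n"
  shows "sim1 n (p * q) (p * rho n i q + rho n i p * q)"
proof -
  define C where "C = - ((-1) ^ i * (lift i p * q))"
  define c where "c = (\<lambda>V. if V = V2 n i then C else 0)"
  have varsC: "vars C \<subseteq> nzcoords n (V2 n i)"
  proof -
    have "vars C \<subseteq> vars ((-1::mpoly) ^ i) \<union> (vars (lift i p) \<union> vars q)"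
      unfolding C_def vars_uminus using vars_mult[of "(-1::mpoly) ^ i" "lift i p * q"] vars_mult[of "lift i p" q] by blast
    moreover have "vars ((-1::mpoly) ^ i) = {}" using vars_power[of "-1" i] by simp
    moreover have "vars q \<subseteq> nzcoords n (V2 n i)"
      using assms inR1_nz_V2 by (auto simp: inR1_def)
    ultimately show ?thesis using vars_lift[OF assms(1,3)] by auto
  qed
  have len2: "length (V2 n i) = n" by simp
  have onesV: "V' = ones n" if "length V' = n" "V'[l := Suc (V' ! l)] = V2 n i" "l = i" for V' l
  proof (rule nth_equalityI)
    show "length V' = length (ones n)" using that by (simp add: ones_def)
    fix k assume "k < length V'"
    then have "V'[l := Suc (V' ! l)] ! k = V2 n i ! k" using that by simp
    then show "V' ! k = ones n ! k" using that \<open>k < length V'\<close> assms(3)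
      by (auto simp: V2_nth nth_list_update ones_def split: if_splits)
  qed
  have main: "(if V' = ones n then p * q - (p * rho n i q + rho n i p * q) else 0) = tot_d n c V'"
    if "length V' = n" "sum_list V' = n" for V'
  proof (cases "V' = ones n")
    case True
    have trm: "(let V = V'[l := Suc (V' ! l)] in dir_d V l (c V)) = (if l = i then dir_d (V2 n i) i C else 0)"
      if "l < n" for l
    proof (cases "l = i")
      case True
      then show ?thesis using \<open>V' = ones n\<close> that by (simp add: c_def V2_def ones_def Let_def numeral_2_eq_2)
    next
      case False
      have "V'[l := Suc (V' ! l)] ! l = 2" using \<open>V' = ones n\<close> that by (simp add: ones_def)
      moreover have "V2 n i ! l = 1" using that False assms(3) by (simp add: V2_nth)
      ultimately have "V'[l := Suc (V' ! l)] \<noteq> V2 n i" by auto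
      then show ?thesis using False by (simp add: c_def Let_def)
    qed
    have "tot_d n c V' = (\<Sum>l<n. (-1) ^ sum_list (take l V') * (if l = i then dir_d (V2 n i) i C else 0))"
      unfolding tot_d_def by (rule sum.cong) (simp_all add: trm)
    also have "\<dots> = (-1) ^ i * dir_d (V2 n i) i C"
      using assms(3) True by (simp add: if_distrib sum_take_ones cong: if_cong)
    also have "\<dots> = p * q - (p * rho n i q + rho n i p * q)"
      unfolding C_def dir_d_scale dir_d_V2[OF assms]
      by (simp add: mult.assoc[symmetric] neg1_sq)
    finally show ?thesis using True by simp
  next
    case False
    have "(let V = V'[l := Suc (V' ! l)] in dir_d V l (c V)) = 0" if "l < n" for l
    proof (cases "V'[l := Suc (V' ! l)] = V2 n i")
      case True
      then have "l \<noteq> i" using onesV[of V' l] \<open>V' \<noteq> ones n\<close> \<open>length V' = n\<close> by auto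
      then have "V2 n i ! l = 1" using that assms(3) by (simp add: V2_nth)
      then have "dir_d (V2 n i) l C = 0"
        using dir_d_one_zero[of l "V2 n i" C] that varsC by simp
      then show ?thesis using True by (simp add: c_def)
    next
      case False
      then show ?thesis by (simp add: c_def Let_def)
    qed
    then show ?thesis using False by (simp add: tot_d_def)
  qed
  show ?thesis
    unfolding sim1_def is_boundary_def
  proof (intro exI[of _ c] conjI allI impI)
    fix V assume "length V = n \<and> sum_list V = Suc n"
    show "vars (c V) \<subseteq> nzcoords n V" using varsC by (auto simp: c_def)
  next
    fix V assume "length V = n \<and> sum_list V = n"
    then show "(if V = ones n then p * q - (p * rho n i q + rho n i p * q) else 0) = tot_d n c V"
      using main by blast
  qed
qed



lemma inR1_mult: "inR1 n p \<Longrightarrow> inR1 n q \<Longrightarrow> inR1 n (p * q)"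
  unfolding inR1_def using vars_mult by blast
lemma inR1_prod: "(\<And>a. a \<in> A \<Longrightarrow> inR1 n (f a)) \<Longrightarrow> inR1 n (prod f A)"
  unfolding inR1_def using vars_prod by blast
lemma inR1_1: "inR1 n 1" by (simp add: inR1_def)

lemma bincoords_le1: "v \<in> bincoords n \<Longrightarrow> l < n \<Longrightarrow> v ! l \<le> 1"
  unfolding bincoords_def using nth_mem by fastforce

lemma bincoords_le1': "v \<in> bincoords n \<Longrightarrow> l < n \<Longrightarrow> v ! l \<le> Suc 0"
  using bincoords_le1 by simp

lemma replicate_upd0[simp]: "(replicate n (0::nat))[i := 0] = replicate n 0"
  by (induction n arbitrary: i) (auto split: nat.splits)

lemma bincoords_len: "v \<in> bincoords n \<Longrightarrow> length v = n"
  unfolding bincoords_def by simp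

lemma bincoordsI: "length v = n \<Longrightarrow> (\<And>l. l < n \<Longrightarrow> v ! l \<le> 1) \<Longrightarrow> v \<in> bincoords n"
proof -
  assume a: "length v = n" "\<And>l. l < n \<Longrightarrow> v ! l \<le> 1"
  have "x \<in> {0, 1}" if "x \<in> set v" for x
  proof -
    obtain l where "l < length v" "v ! l = x" using \<open>x \<in> set v\<close> by (auto simp: in_set_conv_nth)
    then have "x \<le> 1" using a by auto
    then show ?thesis by auto
  qed
  then show ?thesis using a(1) unfolding bincoords_def by blast
qed

lemma bincoords_upd0: "v \<in> bincoords n \<Longrightarrow> v[i := 0] \<in> bincoords n"
proof -
  assume a: "v \<in> bincoords n"
  show ?thesis
  proof (rule bincoordsI)
    show "length (v[i := 0]) = n" using a by (simp add: bincoords_len)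
    fix l assume "l < n"
    then show "v[i := 0] ! l \<le> 1" using bincoords_le1[OF a, of l] bincoords_len[OF a] by (cases "l = i") (auto simp: nth_list_update)
  qed
qed

lemma finite_bincoords: "finite (bincoords n)"
proof -
  have "bincoords n \<subseteq> {xs. set xs \<subseteq> {0,1} \<and> length xs = n}" by (auto simp: bincoords_def)
  then show ?thesis using finite_lists_length_eq[of "{0::nat,1}" n] finite_subset by blast
qed

lemma entry_expand: "v \<noteq> replicate n 0 \<Longrightarrow> entry n v x = (\<Sum>k\<le>degree x. mconst (coeff x k) * mvar v ^ k)"
  by (simp add: entry_def)

lemma inR1_entry:
  assumes "v \<in> bincoords n"
  shows "inR1 n (entry n v x)"
proof (cases "v = replicate n 0")
  case True then show ?thesis by (simp add: entry_def inR1_def)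
next
  case False
  have "vars (entry n v x) \<subseteq> (\<Union>k\<in>{..degree x}. vars (mconst (coeff x k) * mvar v ^ k))"
    unfolding entry_expand[OF False] by (rule vars_sum)
  also have "\<dots> \<subseteq> {v}"
  proof (rule UN_least)
    fix k
    have "vars (mconst (coeff x k) * mvar v ^ k) \<subseteq> vars (mconst (coeff x k)) \<union> vars (mvar v ^ k)"
      by (rule vars_mult)
    also have "\<dots> \<subseteq> {v}" using vars_power[of "mvar v" k] by simp
    finally show "vars (mconst (coeff x k) * mvar v ^ k) \<subseteq> {v}" .
  qed
  also have "{v} \<subseteq> nzcoords n (ones n)" using assms False
    by (auto simp: nzcoords_def bincoords_len bincoords_le1' ones_def)
  finally show ?thesis by (simp add: inR1_def)
qed

lemma rho_mult: "rho n i (p * q) = rho n i p * rho n i q" by (simp add: rho_def msubst_mult)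
lemma rho_add: "rho n i (p + q) = rho n i p + rho n i q" by (simp add: rho_def msubst_add)
lemma rho_prod: "rho n i (prod f A) = (\<Prod>a\<in>A. rho n i (f a))" by (simp add: rho_def msubst_prod)
lemma rho_1: "rho n i 1 = 1" by (simp add: rho_def)

lemma rho_entry:
  assumes "v \<in> bincoords n" "i < n"
  shows "rho n i (entry n v x) = entry n (v[i := 0]) x"
proof (cases "v = replicate n 0")
  case True
  then show ?thesis by (simp add: entry_def rho_def)
next
  case False
  have r: "rho n i (entry n v x) = (\<Sum>k\<le>degree x. mconst (coeff x k) * rsig n i v ^ k)"
    by (simp add: entry_expand[OF False] rho_def msubst_sum msubst_mult msubst_power)
  show ?thesis
  proof (cases "v[i := 0] = replicate n 0")
    case True
    have "(\<Sum>k\<le>degree x. mconst (coeff x k) * (0::mpoly) ^ k) = (\<Sum>k\<in>{0}. mconst (coeff x k) * (0::mpoly) ^ k)"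
      by (rule sum.mono_neutral_right) (auto simp: zero_power)
    then show ?thesis unfolding r using True by (simp add: rsig_def entry_def poly_0_coeff_0)
  next
    case F2: False
    show ?thesis unfolding r using F2 by (simp add: rsig_def entry_expand)
  qed
qed

lemma sim1_uminus: "sim1 n a b \<Longrightarrow> sim1 n (- a) (- b)"
  unfolding sim1_def by (drule is_boundary_uminus, erule is_boundary_cong) auto

lemma rho_sim0:
  assumes "inR1 n q" "i < n"
  shows "sim1 n (rho n i q) 0"
proof -
  have "sim1 n q (rho n i q + q)"
    using hoch[OF inR1_1 assms] by (simp add: rho_1)
  then have "sim1 n (q - (rho n i q + q)) 0" using sim1_iff0 by blast
  then have "sim1 n (- (- rho n i q)) (- 0)" by (intro sim1_uminus) simp
  then show ?thesis by simp
qed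

lemma vsum_nth: "l < n \<Longrightarrow> vsum n ws ! l = (\<Sum>j<length ws. ws ! j ! l)"
  by (simp add: vsum_def sum_list_sum_nth atLeast0LessThan)

lemma length_vsum[simp]: "length (vsum n ws) = n"
  by (simp add: vsum_def)

lemma vsum_ones_iff: "vsum n ws = ones n \<longleftrightarrow> (\<forall>l<n. (\<Sum>j<length ws. ws ! j ! l) = 1)"
proof
  assume a: "vsum n ws = ones n"
  show "\<forall>l<n. (\<Sum>j<length ws. ws ! j ! l) = 1"
  proof (intro allI impI)
    fix l assume "l < n"
    then have "vsum n ws ! l = 1" using a by (simp add: ones_def)
    then show "(\<Sum>j<length ws. ws ! j ! l) = 1" using vsum_nth[OF \<open>l < n\<close>] by simp
  qed
next
  assume a: "\<forall>l<n. (\<Sum>j<length ws. ws ! j ! l) = 1"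
  show "vsum n ws = ones n"
  proof (rule nth_equalityI)
    show "length (vsum n ws) = length (ones n)" by (simp add: ones_def)
    fix l assume "l < length (vsum n ws)"
    then have "l < n" by simp
    then show "vsum n ws ! l = ones n ! l" using a vsum_nth[OF \<open>l < n\<close>] by (simp add: ones_def)
  qed
qed



definition PP :: "nat \<Rightarrow> rat poly list \<Rightarrow> nat list list \<Rightarrow> mpoly" where
  "PP n xs vs = (\<Prod>j<length vs. entry n (vs ! j) (xs ! j))"

definition TT :: "nat \<Rightarrow> nat list list \<Rightarrow> nat list list set" where
  "TT n vs = {ws. length ws = length vs \<and> (\<forall>j<length vs. ws ! j \<in> bincoords n \<and> (\<forall>l<n. ws ! j ! l \<le> vs ! j ! l))
     \<and> vsum n ws = ones n}"

definition mu :: "nat list list \<Rightarrow> nat" where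
  "mu vs = (\<Sum>j<length vs. sum_list (vs ! j))"

definition binl :: "nat \<Rightarrow> nat list list \<Rightarrow> bool" where
  "binl n vs \<longleftrightarrow> (\<forall>j<length vs. vs ! j \<in> bincoords n)"

lemma finite_TT: "finite (TT n vs)"
proof -
  have "TT n vs \<subseteq> {ws. set ws \<subseteq> bincoords n \<and> length ws = length vs}"
    by (auto simp: TT_def in_set_conv_nth)
  then show ?thesis using finite_lists_length_eq[OF finite_bincoords] finite_subset by blast
qed

lemma inR1_PP: "binl n vs \<Longrightarrow> inR1 n (PP n xs vs)"
  unfolding PP_def binl_def by (intro inR1_prod inR1_entry) auto

lemma sum1_unique:
  fixes f :: "nat \<Rightarrow> nat"
  assumes "(\<Sum>j<k. f j) = 1" "j0 < k" "f j0 = 1" "j < k" "j \<noteq> j0"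
  shows "f j = 0"
proof -
  have "(\<Sum>j<k. f j) = f j0 + (\<Sum>j\<in>{..<k} - {j0}. f j)"
    using assms(2) by (simp add: sum.remove)
  then have "(\<Sum>j\<in>{..<k} - {j0}. f j) = 0" using assms(1,3) by simp
  then show ?thesis using assms(4,5) by simp
qed

lemma sum1_from_zero:
  fixes f :: "nat \<Rightarrow> nat"
  assumes "j0 < k" "\<And>j. j < k \<Longrightarrow> j \<noteq> j0 \<Longrightarrow> f j = 0"
  shows "(\<Sum>j<k. f j) = f j0"
proof -
  have "(\<Sum>j<k. f j) = f j0 + (\<Sum>j\<in>{..<k} - {j0}. f j)"
    using assms(1) by (simp add: sum.remove)
  also have "(\<Sum>j\<in>{..<k} - {j0}. f j) = 0" using assms(2) by simp
  finally show ?thesis by simp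
qed

lemma sum_list_upd0_le: "sum_list (v[i := 0]) \<le> sum_list (v :: nat list)"
  by (cases "i < length v") (simp_all add: sum_list_update list_update_beyond)

lemma sum_list_upd0_less: "i < length v \<Longrightarrow> v ! i \<noteq> 0 \<Longrightarrow> sum_list (v[i := 0]) < sum_list (v :: nat list)"
  using elem_le_sum_list[of i v] by (simp add: sum_list_update)

lemma PP_remove:
  assumes "j0 < length vs"
  shows "PP n xs vs = entry n (vs ! j0) (xs ! j0) * (\<Prod>j\<in>{..<length vs} - {j0}. entry n (vs ! j) (xs ! j))"
  unfolding PP_def using assms by (simp add: prod.remove)

lemma kfold:
  assumes "binl n vs"
  shows "sim1 n (PP n xs vs) (\<Sum>ws\<in>TT n vs. PP n xs ws)"
  using assms
proof (induction "mu vs" arbitrary: vs rule: less_induct)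
  case less
  define k where "k = length vs"
  have bin: "vs ! j \<in> bincoords n" if "j < k" for j using less.prems that by (simp add: binl_def k_def)
  have lenv: "length (vs ! j) = n" if "j < k" for j using bincoords_len[OF bin[OF that]] .
  have le1: "vs ! j ! l \<le> 1" if "j < k" "l < n" for j l using bincoords_le1[OF bin[OF that(1)] that(2)] .
  have TTmem: "ws \<in> TT n vs \<longleftrightarrow> length ws = k \<and> (\<forall>j<k. ws ! j \<in> bincoords n \<and> (\<forall>l<n. ws ! j ! l \<le> vs ! j ! l))
     \<and> (\<forall>l<n. (\<Sum>j<k. ws ! j ! l) = 1)" for ws
    unfolding TT_def k_def vsum_ones_iff by auto
  consider (A) "\<exists>i<n. \<forall>j<k. vs ! j ! i = 0"
    | (B) "\<exists>i<n. \<exists>j0<k. \<exists>j1<k. j0 \<noteq> j1 \<and> vs ! j0 ! i \<noteq> 0 \<and> vs ! j1 ! i \<noteq> 0"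
    | (C) "\<forall>i<n. \<exists>j<k. vs ! j ! i \<noteq> 0" "\<forall>i<n. \<forall>j0<k. \<forall>j1<k. vs ! j0 ! i \<noteq> 0 \<and> vs ! j1 ! i \<noteq> 0 \<longrightarrow> j0 = j1"
    by blast
  then show ?case
  proof cases
    case A
    then obtain i where i: "i < n" "\<And>j. j < k \<Longrightarrow> vs ! j ! i = 0" by blast
    have "rho n i (PP n xs vs) = PP n xs vs"
      unfolding PP_def rho_prod k_def[symmetric]
    proof (rule prod.cong[OF refl])
      fix j assume "j \<in> {..<k}"
      then have j: "j < k" by simp
      have "(vs ! j)[i := 0] = vs ! j" using i(2)[OF j] by (metis list_update_id)
      then show "rho n i (entry n (vs ! j) (xs ! j)) = entry n (vs ! j) (xs ! j)"
        using rho_entry[OF bin[OF j] i(1)] by simp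
    qed
    then have "sim1 n (PP n xs vs) 0" using rho_sim0[OF inR1_PP[OF less.prems, of xs] i(1)] by simp
    moreover have "TT n vs = {}"
    proof -
      have False if "ws \<in> TT n vs" for ws
      proof -
        have "ws ! j ! i = 0" if "j < k" for j using \<open>ws \<in> TT n vs\<close> i that unfolding TTmem by force
        then have "(\<Sum>j<k. ws ! j ! i) = 0" by simp
        then show False using \<open>ws \<in> TT n vs\<close> i(1) unfolding TTmem by simp
      qed
      then show ?thesis by blast
    qed
    ultimately show ?thesis by simp
  next
    case B
    then obtain i j0 j1 where ij: "i < n" "j0 < k" "j1 < k" "j0 \<noteq> j1" "vs ! j0 ! i \<noteq> 0" "vs ! j1 ! i \<noteq> 0"
      by blast
    define vs1 where "vs1 = map (\<lambda>j. if j = j0 then vs ! j else (vs ! j)[i := 0]) [0..<k]"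
    define vs2 where "vs2 = vs[j0 := (vs ! j0)[i := 0]]"
    have len1: "length vs1 = k" by (simp add: vs1_def)
    have len2: "length vs2 = k" by (simp add: vs2_def k_def)
    have nth1: "vs1 ! j = (if j = j0 then vs ! j else (vs ! j)[i := 0])" if "j < k" for j
      using that by (simp add: vs1_def)
    have nth2: "vs2 ! j = (if j = j0 then (vs ! j)[i := 0] else vs ! j)" if "j < k" for j
      using that ij(2) by (simp add: vs2_def k_def nth_list_update)
    have bin1: "binl n vs1" unfolding binl_def len1
      using nth1 bin bincoords_upd0 by simp
    have bin2: "binl n vs2" unfolding binl_def len2
      using nth2 bin bincoords_upd0 by simp
    have mu1: "mu vs1 < mu vs"
      unfolding mu_def len1 k_def[symmetric]
    proof (rule sum_strict_mono_ex1)
      show "\<forall>j\<in>{..<k}. sum_list (vs1 ! j) \<le> sum_list (vs ! j)"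
        using nth1 sum_list_upd0_le by simp
      show "\<exists>j\<in>{..<k}. sum_list (vs1 ! j) < sum_list (vs ! j)"
      proof
        show "j1 \<in> {..<k}" using ij by simp
        show "sum_list (vs1 ! j1) < sum_list (vs ! j1)"
          using ij nth1[OF ij(3)] sum_list_upd0_less[of i "vs ! j1"] lenv[OF ij(3)] by simp
      qed
    qed simp
    have mu2: "mu vs2 < mu vs"
      unfolding mu_def len2 k_def[symmetric]
    proof (rule sum_strict_mono_ex1)
      show "\<forall>j\<in>{..<k}. sum_list (vs2 ! j) \<le> sum_list (vs ! j)"
        using nth2 sum_list_upd0_le by simp
      show "\<exists>j\<in>{..<k}. sum_list (vs2 ! j) < sum_list (vs ! j)"
      proof
        show "j0 \<in> {..<k}" using ij by simp
        show "sum_list (vs2 ! j0) < sum_list (vs ! j0)"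
          using ij nth2[OF ij(2)] sum_list_upd0_less[of i "vs ! j0"] lenv[OF ij(2)] by simp
      qed
    qed simp
    have IH1: "sim1 n (PP n xs vs1) (\<Sum>ws\<in>TT n vs1. PP n xs ws)" using less.hyps[OF mu1 bin1] .
    have IH2: "sim1 n (PP n xs vs2) (\<Sum>ws\<in>TT n vs2. PP n xs ws)" using less.hyps[OF mu2 bin2] .
    define p where "p = entry n (vs ! j0) (xs ! j0)"
    define q where "q = (\<Prod>j\<in>{..<k} - {j0}. entry n (vs ! j) (xs ! j))"
    have Pvs: "PP n xs vs = p * q" unfolding p_def q_def k_def using PP_remove ij(2) k_def by simp
    have pR: "inR1 n p" unfolding p_def using inR1_entry[OF bin[OF ij(2)]] .
    have qR: "inR1 n q" unfolding q_def using inR1_entry bin by (intro inR1_prod) auto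
    have rq: "rho n i q = (\<Prod>j\<in>{..<k} - {j0}. entry n ((vs ! j)[i := 0]) (xs ! j))"
      unfolding q_def rho_prod using rho_entry[OF bin ij(1)] by simp
    have rp: "rho n i p = entry n ((vs ! j0)[i := 0]) (xs ! j0)"
      unfolding p_def using rho_entry[OF bin[OF ij(2)] ij(1)] .
    have P1: "PP n xs vs1 = p * rho n i q"
      unfolding rq PP_remove[of j0 vs1, unfolded len1, OF ij(2)] p_def using nth1 ij(2)
      by (intro arg_cong2[where f="(*)"] prod.cong) auto
    have P2: "PP n xs vs2 = rho n i p * q"
      unfolding rp PP_remove[of j0 vs2, unfolded len2, OF ij(2)] q_def using nth2 ij(2)
      by (intro arg_cong2[where f="(*)"] prod.cong) auto
    have step: "sim1 n (PP n xs vs) (PP n xs vs1 + PP n xs vs2)"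
      unfolding Pvs P1 P2 using hoch[OF pR qR ij(1)] .
    have vsj0: "vs ! j0 ! i = 1" using le1[OF ij(2,1)] ij(5) by simp
    have T1: "TT n vs1 = {ws \<in> TT n vs. ws ! j0 ! i = 1}"
    proof (intro set_eqI iffI)
      fix ws assume ws: "ws \<in> TT n vs1"
      then have wl: "length ws = k" and wb: "\<And>j. j < k \<Longrightarrow> ws ! j \<in> bincoords n"
        and wle: "\<And>j l. j < k \<Longrightarrow> l < n \<Longrightarrow> ws ! j ! l \<le> vs1 ! j ! l"
        and ws1: "\<And>l. l < n \<Longrightarrow> (\<Sum>j<k. ws ! j ! l) = 1"
        unfolding TT_def len1 vsum_ones_iff by auto
      have le: "ws ! j ! l \<le> vs ! j ! l" if "j < k" "l < n" for j l
        using wle[OF that] nth1[OF that(1)] lenv[OF that(1)] that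
        by (cases "j = j0"; cases "l = i") (auto simp: nth_list_update)
      have z: "ws ! j ! i = 0" if "j < k" "j \<noteq> j0" for j
        using wle[OF that(1) ij(1)] nth1[OF that(1)] that lenv[OF that(1)] ij(1) by simp
      have "(\<Sum>j<k. ws ! j ! i) = ws ! j0 ! i" by (rule sum1_from_zero[OF ij(2)]) (use z in auto)
      then have "ws ! j0 ! i = 1" using ws1[OF ij(1)] by simp
      moreover have "ws \<in> TT n vs" unfolding TTmem using wl wb le ws1 by auto
      ultimately show "ws \<in> {ws \<in> TT n vs. ws ! j0 ! i = 1}" by simp
    next
      fix ws assume ws: "ws \<in> {ws \<in> TT n vs. ws ! j0 ! i = 1}"
      then have wl: "length ws = k" and wb: "\<And>j. j < k \<Longrightarrow> ws ! j \<in> bincoords n"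
        and wle: "\<And>j l. j < k \<Longrightarrow> l < n \<Longrightarrow> ws ! j ! l \<le> vs ! j ! l"
        and ws1: "\<And>l. l < n \<Longrightarrow> (\<Sum>j<k. ws ! j ! l) = 1" and w0: "ws ! j0 ! i = 1"
        unfolding TTmem by auto
      have z: "ws ! j ! i = 0" if "j < k" "j \<noteq> j0" for j
        by (rule sum1_unique[OF ws1[OF ij(1)] ij(2) w0 that])
      have le: "ws ! j ! l \<le> vs1 ! j ! l" if "j < k" "l < n" for j l
        using wle[OF that] nth1[OF that(1)] lenv[OF that(1)] that z[OF that(1)]
        by (cases "j = j0"; cases "l = i") (auto simp: nth_list_update)
      show "ws \<in> TT n vs1" unfolding TT_def len1 vsum_ones_iff using wl wb le ws1 by auto
    qed
    have T2: "TT n vs2 = {ws \<in> TT n vs. ws ! j0 ! i \<noteq> 1}"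
    proof (intro set_eqI iffI)
      fix ws assume ws: "ws \<in> TT n vs2"
      then have wl: "length ws = k" and wb: "\<And>j. j < k \<Longrightarrow> ws ! j \<in> bincoords n"
        and wle: "\<And>j l. j < k \<Longrightarrow> l < n \<Longrightarrow> ws ! j ! l \<le> vs2 ! j ! l"
        and ws1: "\<And>l. l < n \<Longrightarrow> (\<Sum>j<k. ws ! j ! l) = 1"
        unfolding TT_def len2 vsum_ones_iff by auto
      have le: "ws ! j ! l \<le> vs ! j ! l" if "j < k" "l < n" for j l
        using wle[OF that] nth2[OF that(1)] lenv[OF that(1)] that
        by (cases "j = j0"; cases "l = i") (auto simp: nth_list_update)
      have "ws ! j0 ! i = 0"
        using wle[OF ij(2) ij(1)] nth2[OF ij(2)] lenv[OF ij(2)] ij(1) by simp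
      moreover have "ws \<in> TT n vs" unfolding TTmem using wl wb le ws1 by auto
      ultimately show "ws \<in> {ws \<in> TT n vs. ws ! j0 ! i \<noteq> 1}" by simp
    next
      fix ws assume ws: "ws \<in> {ws \<in> TT n vs. ws ! j0 ! i \<noteq> 1}"
      then have wl: "length ws = k" and wb: "\<And>j. j < k \<Longrightarrow> ws ! j \<in> bincoords n"
        and wle: "\<And>j l. j < k \<Longrightarrow> l < n \<Longrightarrow> ws ! j ! l \<le> vs ! j ! l"
        and ws1: "\<And>l. l < n \<Longrightarrow> (\<Sum>j<k. ws ! j ! l) = 1" and w0: "ws ! j0 ! i \<noteq> 1"
        unfolding TTmem by auto
      have "ws ! j0 ! i \<le> 1" using bincoords_le1[OF wb[OF ij(2)] ij(1)] .
      then have z: "ws ! j0 ! i = 0" using w0 by simp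
      have le: "ws ! j ! l \<le> vs2 ! j ! l" if "j < k" "l < n" for j l
        using wle[OF that] nth2[OF that(1)] lenv[OF that(1)] that z
        by (cases "j = j0"; cases "l = i") (auto simp: nth_list_update)
      show "ws \<in> TT n vs2" unfolding TT_def len2 vsum_ones_iff using wl wb le ws1 by auto
    qed
    have Gsplit: "(\<Sum>ws\<in>TT n vs. PP n xs ws) = (\<Sum>ws\<in>TT n vs1. PP n xs ws) + (\<Sum>ws\<in>TT n vs2. PP n xs ws)"
    proof -
      have "TT n vs = TT n vs1 \<union> TT n vs2" unfolding T1 T2 by blast
      moreover have "TT n vs1 \<inter> TT n vs2 = {}" unfolding T1 T2 by blast
      ultimately show ?thesis using finite_TT by (simp add: sum.union_disjoint)
    qed
    show ?thesis unfolding Gsplit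
      by (rule sim1_trans[OF step sim1_add[OF IH1 IH2]])
  next
    case C
    have one: "vs ! j ! l = 1" if "j < k" "l < n" "vs ! j ! l \<noteq> 0" for j l
      using le1[OF that(1,2)] that(3) by simp
    have TTeq: "TT n vs = {vs}"
    proof (intro set_eqI iffI)
      fix ws assume ws: "ws \<in> TT n vs"
      then have wl: "length ws = k" and wb: "\<And>j. j < k \<Longrightarrow> ws ! j \<in> bincoords n"
        and wle: "\<And>j l. j < k \<Longrightarrow> l < n \<Longrightarrow> ws ! j ! l \<le> vs ! j ! l"
        and ws1: "\<And>l. l < n \<Longrightarrow> (\<Sum>j<k. ws ! j ! l) = 1"
        unfolding TTmem by auto
      have eq: "ws ! j ! l = vs ! j ! l" if "j < k" "l < n" for j l
      proof (cases "vs ! j ! l = 0")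
        case True then show ?thesis using wle[OF that] by simp
      next
        case False
        have z: "ws ! j' ! l = 0" if "j' < k" "j' \<noteq> j" for j'
        proof -
          have "vs ! j' ! l = 0" using C(2) \<open>l < n\<close> \<open>j < k\<close> that False by blast
          then show ?thesis using wle[OF that(1) \<open>l < n\<close>] by simp
        qed
        have "(\<Sum>j<k. ws ! j ! l) = ws ! j ! l" by (rule sum1_from_zero[OF that(1)]) (use z in auto)
        then show ?thesis using ws1[OF that(2)] one[OF that False] by simp
      qed
      have "ws = vs"
      proof (rule nth_equalityI)
        show "length ws = length vs" using wl k_def by simp
        fix j assume "j < length ws"
        then have j: "j < k" using wl by simp
        show "ws ! j = vs ! j"
          by (rule nth_equalityI) (use bincoords_len[OF wb[OF j]] lenv[OF j] eq[OF j] in auto)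
      qed
      then show "ws \<in> {vs}" by simp
    next
      fix ws assume "ws \<in> {vs}"
      then have "ws = vs" by simp
      have s1: "(\<Sum>j<k. vs ! j ! l) = 1" if lt: "l < n" for l
      proof -
        obtain j where j: "j < k" "vs ! j ! l \<noteq> 0" using C(1) lt by blast
        have "(\<Sum>j<k. vs ! j ! l) = vs ! j ! l"
          by (rule sum1_from_zero[OF j(1)]) (use C(2) lt j in blast)
        then show ?thesis using one[OF j(1) lt j(2)] by simp
      qed
      show "ws \<in> TT n vs" unfolding \<open>ws = vs\<close> TTmem using bin s1 k_def by auto
    qed
    show ?thesis unfolding TTeq by (simp add: sim1_refl)
  qed
qed



lemma part1:
  assumes "v \<in> bincoords n" "w \<in> bincoords n" "i < n" "v ! i = 0" "w ! i = 0"
  shows "sim1 n (entry n v x * entry n w y) 0"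
proof -
  have "v[i := 0] = v" "w[i := 0] = w" using assms(4,5) by (metis list_update_id)+
  then have "rho n i (entry n v x * entry n w y) = entry n v x * entry n w y"
    by (simp add: rho_mult rho_entry assms(1,2,3))
  then show ?thesis
    using rho_sim0[OF inR1_mult[OF inR1_entry[OF assms(1), of x] inR1_entry[OF assms(2), of y]] assms(3)] by simp
qed

lemma part1b:
  assumes "v \<in> bincoords n" "v \<noteq> ones n"
  shows "sim1 n (entry n v x) 0"
proof -
  obtain i where i: "i < n" "v ! i = 0"
  proof (rule ccontr)
    assume "\<not> thesis"
    then have "\<forall>i<n. v ! i \<noteq> 0" using that by blast
    then have "\<forall>i<n. v ! i = 1" using bincoords_le1[OF assms(1)] by (metis le_neq_implies_less less_one)
    then have "v = ones n" using bincoords_len[OF assms(1)]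
      by (intro nth_equalityI) (auto simp: ones_def)
    then show False using assms(2) by simp
  qed
  have "entry n (replicate n 0) 1 = 1" by (simp add: entry_def)
  moreover have "replicate n 0 \<in> bincoords n" by (rule bincoordsI) auto
  moreover have "replicate n 0 ! i = (0::nat)" using i by simp
  ultimately show ?thesis using part1[OF assms(1) _ i(1) i(2), of "replicate n 0" x 1] by simp
qed

lemma part2:
  assumes "v \<in> bincoords n" "w \<in> bincoords n"
  shows "sim1 n (entry n v x * entry n w y)
         (\<Sum>(v', w')\<in>{(v', w'). v' \<in> bincoords n \<and> w' \<in> bincoords n \<and>
                        list_all2 (\<le>) v' v \<and> list_all2 (\<le>) w' w \<and> map2 (+) v' w' = ones n}.
            entry n v' x * entry n w' y)"
proof -
  let ?S = "{(v', w'). v' \<in> bincoords n \<and> w' \<in> bincoords n \<and>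
                        list_all2 (\<le>) v' v \<and> list_all2 (\<le>) w' w \<and> map2 (+) v' w' = ones n}"
  have lv: "length v = n" "length w = n" using assms bincoords_len by auto
  have bl: "binl n [v, w]" unfolding binl_def
  proof (intro allI impI)
    fix j assume "j < length [v, w]"
    then have "j = 0 \<or> j = 1" by auto
    then show "[v, w] ! j \<in> bincoords n" using assms by auto
  qed
  have P: "PP n [x, y] [v, w] = entry n v x * entry n w y"
    by (simp add: PP_def lessThan_Suc numeral_2_eq_2)
  have h: "(\<lambda>(a, b). [a, b]) ` ?S = TT n [v, w]"
  proof (intro set_eqI iffI)
    fix ws assume "ws \<in> (\<lambda>(a, b). [a, b]) ` ?S"
    then obtain p where p: "p \<in> ?S" "ws = (\<lambda>(a, b). [a, b]) p" by (rule imageE) simp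
    obtain a b where "p = (a, b)" by (cases p)
    then have ab: "ws = [a, b]" "(a, b) \<in> ?S" using p by auto
    then have la: "length a = n" "length b = n" using bincoords_len by auto
    have lea: "a ! l \<le> v ! l" "b ! l \<le> w ! l" if "l < n" for l
      using ab(2) la lv that by (auto simp: list_all2_conv_all_nth)
    have s: "a ! l + b ! l = 1" if "l < n" for l
    proof -
      have "map2 (+) a b ! l = ones n ! l" using ab(2) by simp
      then show ?thesis using la that by (simp add: ones_def)
    qed
    show "ws \<in> TT n [v, w]"
      unfolding TT_def vsum_ones_iff ab(1) using ab(2) lea s
      by (auto simp: less_Suc_eq numeral_2_eq_2 lessThan_Suc add.commute)
  next
    fix ws assume ws: "ws \<in> TT n [v, w]"
    then have l2: "length ws = 2" by (simp add: TT_def)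
    then have wseq: "ws = [ws ! 0, ws ! 1]"
      by (intro nth_equalityI) (auto simp: less_2_cases_iff)
    define a where "a = ws ! 0"
    define b where "b = ws ! 1"
    have ab: "a \<in> bincoords n" "b \<in> bincoords n" "\<forall>l<n. a ! l \<le> v ! l" "\<forall>l<n. b ! l \<le> w ! l"
      using ws unfolding TT_def a_def b_def by auto
    have s: "\<forall>l<n. a ! l + b ! l = 1"
    proof -
      have "\<forall>l<n. (\<Sum>j<length ws. ws ! j ! l) = 1" using ws[unfolded TT_def mem_Collect_eq vsum_ones_iff] by blast
      then show ?thesis unfolding l2 a_def b_def by (simp add: numeral_2_eq_2 lessThan_Suc add.commute)
    qed
    have la: "length a = n" "length b = n" using ab bincoords_len by auto
    have "map2 (+) a b = ones n"
      by (rule nth_equalityI) (use la s in \<open>auto simp: ones_def\<close>)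
    moreover have "list_all2 (\<le>) a v" "list_all2 (\<le>) b w"
      using ab la lv by (auto simp: list_all2_conv_all_nth)
    ultimately have "(a, b) \<in> ?S" using ab by simp
    moreover have "ws = [a, b]" using wseq a_def b_def by simp
    ultimately show "ws \<in> (\<lambda>(a, b). [a, b]) ` ?S" by force
  qed
  have inj: "inj_on (\<lambda>(a, b). [a, b]) ?S" by (auto simp: inj_on_def)
  have "(\<Sum>ws\<in>TT n [v, w]. PP n [x, y] ws) = (\<Sum>p\<in>?S. PP n [x, y] ((\<lambda>(a, b). [a, b]) p))"
    by (rule sum.reindex_bij_betw[symmetric]) (use inj h in \<open>simp add: bij_betw_def\<close>)
  also have "\<dots> = (\<Sum>(v', w')\<in>?S. entry n v' x * entry n w' y)"
    by (rule sum.cong) (auto simp: PP_def lessThan_Suc numeral_2_eq_2)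
  finally show ?thesis using kfold[OF bl, of "[x, y]"] P by simp
qed



abbreviation tt :: "rat poly" where "tt \<equiv> [:0, 1:]"

lemma tt_pow: "tt ^ k = monom 1 k"
  using monom_altdef[of "1::rat" k] by simp

lemma ones_ne0: "n \<ge> 1 \<Longrightarrow> ones n \<noteq> replicate n 0"
  by (cases n) (auto simp: ones_def)

lemma ones_bin: "ones n \<in> bincoords n"
  by (rule bincoordsI) (auto simp: ones_def)

lemma entry_tk:
  assumes "n \<ge> 1"
  shows "entry n (ones n) (tt ^ k) = mvar (ones n) ^ k"
proof -
  have "entry n (ones n) (tt ^ k) = (\<Sum>j\<le>k. mconst (if k = j then 1 else 0) * mvar (ones n) ^ j)"
    unfolding entry_expand[OF ones_ne0[OF assms]] tt_pow by (simp add: degree_monom_eq coeff_monom)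
  also have "\<dots> = (\<Sum>j\<le>k. if k = j then mvar (ones n) ^ j else 0)"
    by (rule sum.cong) auto
  also have "\<dots> = mvar (ones n) ^ k" by (simp add: sum.delta)
  finally show ?thesis .
qed

lemma entry_t:
  assumes "n \<ge> 1"
  shows "entry n (ones n) tt = mvar (ones n)"
  using entry_tk[OF assms, of 1] by simp

lemma entry_zero_t: "entry n (replicate n 0) tt = 0"
  by (simp add: entry_def)

lemma prod_list_has0: "(0::'a::semiring_1) \<in> set xs \<Longrightarrow> prod_list xs = 0"
  by (induction xs) auto

definition WW :: "nat \<Rightarrow> nat \<Rightarrow> nat list list set" where
  "WW n k = {ws. length ws = k \<and> (\<forall>w\<in>set ws. w \<in> bincoords n \<and> w \<noteq> replicate n 0) \<and> vsum n ws = ones n}"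

lemma PP_prod_list:
  assumes "length ws = k"
  shows "PP n (replicate k tt) ws = (\<Prod>w\<leftarrow>ws. entry n w tt)"
  unfolding PP_def prod.list_conv_set_nth using assms by (simp add: atLeast0LessThan)

lemma part3:
  assumes "n \<ge> 1"
  shows "sim1 n (entry n (ones n) (tt ^ k)) (\<Sum>ws\<in>WW n k. \<Prod>w\<leftarrow>ws. entry n w tt)"
proof -
  let ?vs = "replicate k (ones n)"
  have bl: "binl n ?vs" using ones_bin by (simp add: binl_def)
  have P: "PP n (replicate k tt) ?vs = entry n (ones n) (tt ^ k)"
    by (simp add: PP_def entry_t[OF assms] entry_tk[OF assms])
  have sub: "WW n k \<subseteq> TT n ?vs"
  proof
    fix ws assume "ws \<in> WW n k"
    then have ws: "length ws = k" "\<And>j. j < k \<Longrightarrow> ws ! j \<in> bincoords n" "vsum n ws = ones n"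
      unfolding WW_def by auto
    have "ws ! j ! l \<le> ones n ! l" if "j < k" "l < n" for j l
      using bincoords_le1[OF ws(2)[OF that(1)] that(2)] that(2) by (simp add: ones_def)
    then show "ws \<in> TT n ?vs" using ws unfolding TT_def by auto
  qed
  have zero: "(\<Prod>w\<leftarrow>ws. entry n w tt) = 0" if "ws \<in> TT n ?vs - WW n k" for ws
  proof -
    from that have ws: "length ws = k" "\<And>j. j < k \<Longrightarrow> ws ! j \<in> bincoords n" "vsum n ws = ones n"
      unfolding TT_def by auto
    have "\<exists>w\<in>set ws. w = replicate n 0"
      using that ws unfolding WW_def by (auto simp: in_set_conv_nth)
    then have "0 \<in> set (map (\<lambda>w. entry n w tt) ws)" using entry_zero_t by force
    then show ?thesis by (rule prod_list_has0)
  qed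
  have "(\<Sum>ws\<in>TT n ?vs. PP n (replicate k tt) ws) = (\<Sum>ws\<in>TT n ?vs. \<Prod>w\<leftarrow>ws. entry n w tt)"
    by (rule sum.cong) (auto simp: TT_def PP_prod_list)
  also have "\<dots> = (\<Sum>ws\<in>WW n k. \<Prod>w\<leftarrow>ws. entry n w tt)"
    by (rule sum.mono_neutral_right[OF finite_TT sub]) (use zero in blast)
  finally show ?thesis using kfold[OF bl, of "replicate k tt"] P by simp
qed

lemma WW_total:
  assumes "ws \<in> WW n k"
  shows "(\<Sum>j<k. sum_list (ws ! j)) = n"
proof -
  have ws: "length ws = k" "\<And>j. j < k \<Longrightarrow> ws ! j \<in> bincoords n" "\<And>l. l < n \<Longrightarrow> (\<Sum>j<k. ws ! j ! l) = 1"
    using assms unfolding WW_def vsum_ones_iff by (auto dest: nth_mem)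
  have "(\<Sum>j<k. sum_list (ws ! j)) = (\<Sum>j<k. \<Sum>l<n. ws ! j ! l)"
    by (rule sum.cong) (auto simp: sum_list_sum_nth atLeast0LessThan bincoords_len[OF ws(2)])
  also have "\<dots> = (\<Sum>l<n. \<Sum>j<k. ws ! j ! l)" by (rule sum.swap)
  also have "\<dots> = n" using ws(3) by simp
  finally show ?thesis .
qed

lemma sum_list_pos:
  assumes "w \<in> bincoords n" "w \<noteq> replicate n 0"
  shows "sum_list w \<ge> 1"
proof -
  have "\<exists>l<length w. w ! l \<noteq> 0"
  proof (rule ccontr)
    assume "\<not> ?thesis"
    then have "w = replicate n 0" using bincoords_len[OF assms(1)]
      by (intro nth_equalityI) auto
    then show False using assms(2) by simp
  qed
  then obtain l where "l < length w" "w ! l \<noteq> 0" by blast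
  then show ?thesis using elem_le_sum_list[of l w] by simp
qed

lemma WW_pos:
  assumes "ws \<in> WW n k" "j < k"
  shows "sum_list (ws ! j) \<ge> 1" "ws ! j \<in> bincoords n"
proof -
  have "ws ! j \<in> set ws" using assms by (simp add: WW_def)
  then have "ws ! j \<in> bincoords n \<and> ws ! j \<noteq> replicate n 0" using assms(1) by (simp add: WW_def)
  then show "sum_list (ws ! j) \<ge> 1" "ws ! j \<in> bincoords n" using sum_list_pos by auto
qed

lemma WW_empty:
  assumes "k > n"
  shows "WW n k = {}"
proof (rule ccontr)
  assume "WW n k \<noteq> {}"
  then obtain ws where ws: "ws \<in> WW n k" by blast
  have "k = (\<Sum>j<k. 1::nat)" by simp
  also have "\<dots> \<le> (\<Sum>j<k. sum_list (ws ! j))" by (rule sum_mono) (use WW_pos[OF ws] in simp)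
  also have "\<dots> = n" using WW_total[OF ws] .
  finally show False using assms by simp
qed

lemma unit_coord_nth: "l < n \<Longrightarrow> m < n \<Longrightarrow> unit_coord n l ! m = (if m = l then 1 else 0)"
  by (simp add: unit_coord_def nth_list_update)

lemma length_unit_coord[simp]: "length (unit_coord n l) = n"
  by (simp add: unit_coord_def)

lemma unit_coord_bin: "l < n \<Longrightarrow> unit_coord n l \<in> bincoords n"
  by (rule bincoordsI) (auto simp: unit_coord_nth)

lemma unit_coord_ne0: "l < n \<Longrightarrow> unit_coord n l \<noteq> replicate n 0"
proof
  assume l: "l < n" and e: "unit_coord n l = replicate n 0"
  have "unit_coord n l ! l = 1" using l by (simp add: unit_coord_nth)
  moreover have "replicate n (0::nat) ! l = 0" using l by simp
  ultimately show False using e by simp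
qed

lemma sum1_unit:
  assumes "w \<in> bincoords n" "sum_list w = 1"
  shows "\<exists>l<n. w = unit_coord n l"
proof -
  have lw: "length w = n" using bincoords_len[OF assms(1)] .
  have "\<exists>l<length w. w ! l \<noteq> 0"
  proof (rule ccontr)
    assume "\<not> ?thesis"
    then have "sum_list w = 0" by (simp add: sum_list_sum_nth)
    then show False using assms(2) by simp
  qed
  then obtain l where l: "l < n" "w ! l \<noteq> 0" using lw by blast
  have s: "(\<Sum>m<n. w ! m) = 1" using assms(2) lw by (simp add: sum_list_sum_nth atLeast0LessThan)
  have wl: "w ! l = 1" using bincoords_le1[OF assms(1) l(1)] l(2) by simp
  have "w = unit_coord n l"
  proof (rule nth_equalityI)
    show "length w = length (unit_coord n l)" using lw by simp
    fix m assume "m < length w"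
    then have m: "m < n" using lw by simp
    show "w ! m = unit_coord n l ! m"
    proof (cases "m = l")
      case True then show ?thesis using wl l by (simp add: unit_coord_nth)
    next
      case False
      then have "w ! m = 0" using sum1_unique[of "\<lambda>m. w ! m" n l m] s l wl m by simp
      then show ?thesis using False l m by (simp add: unit_coord_nth)
    qed
  qed
  then show ?thesis using l by blast
qed

lemma WW_n_eq: "WW n n = map (unit_coord n) ` permutations_of_set {..<n}"
proof (intro set_eqI iffI)
  fix ws assume ws: "ws \<in> WW n n"
  have lw: "length ws = n" using ws by (simp add: WW_def)
  have s1: "\<And>l. l < n \<Longrightarrow> (\<Sum>j<n. ws ! j ! l) = 1"
    using ws lw unfolding WW_def vsum_ones_iff by auto
  have each1: "sum_list (ws ! j) = 1" if "j < n" for j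
  proof -
    have "(\<Sum>j<n. sum_list (ws ! j) - 1) = (\<Sum>j<n. sum_list (ws ! j)) - (\<Sum>j<n. 1)"
      by (rule sum_subtractf_nat) (use WW_pos[OF ws] in simp)
    also have "\<dots> = 0" using WW_total[OF ws] by simp
    finally have "sum_list (ws ! j) - 1 = 0" using that by simp
    then show ?thesis using WW_pos(1)[OF ws that] by simp
  qed
  have ex: "\<exists>l. l < n \<and> ws ! j = unit_coord n l" if jn: "j < n" for j
  proof -
    obtain l where "l < n" "ws ! j = unit_coord n l"
      using sum1_unit[OF WW_pos(2)[OF ws jn] each1[OF jn]] by blast
    then show ?thesis by blast
  qed
  define g where "g j = (SOME l. l < n \<and> ws ! j = unit_coord n l)" for j
  have g: "g j < n \<and> ws ! j = unit_coord n (g j)" if "j < n" for j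
    unfolding g_def by (rule someI_ex[OF ex[OF that]])
  define xs where "xs = map g [0..<n]"
  have lxs: "length xs = n" by (simp add: xs_def)
  have wsx: "ws = map (unit_coord n) xs"
  proof (rule nth_equalityI)
    show "length ws = length (map (unit_coord n) xs)" using lw lxs by simp
    fix i assume "i < length ws"
    then have i: "i < n" using lw by simp
    have "map (unit_coord n) xs ! i = unit_coord n (g i)" using i by (simp add: xs_def)
    then show "ws ! i = map (unit_coord n) xs ! i" using g[OF i] by simp
  qed
  have setx: "set xs = {..<n}"
  proof
    show "set xs \<subseteq> {..<n}" using g by (auto simp: xs_def)
    show "{..<n} \<subseteq> set xs"
    proof
      fix m assume "m \<in> {..<n}"
      then have m: "m < n" by simp
      have "\<exists>j<n. ws ! j ! m \<noteq> 0"
      proof (rule ccontr)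
        assume "\<not> ?thesis"
        then have "(\<Sum>j<n. ws ! j ! m) = 0" by simp
        then show False using s1[OF m] by simp
      qed
      then obtain j where j: "j < n" "ws ! j ! m \<noteq> 0" by blast
      have "unit_coord n (g j) ! m \<noteq> 0" using j g[OF j(1)] by simp
      then have "g j = m" using unit_coord_nth[of "g j" n m] g[OF j(1)] m by (cases "m = g j") auto
      then show "m \<in> set xs" using j(1) by (auto simp: xs_def)
    qed
  qed
  have "distinct xs" by (rule card_distinct) (simp only: setx lxs card_lessThan)
  then have "xs \<in> permutations_of_set {..<n}" using setx by (simp add: permutations_of_set_def)
  then show "ws \<in> map (unit_coord n) ` permutations_of_set {..<n}" using wsx by blast
next
  fix ws assume "ws \<in> map (unit_coord n) ` permutations_of_set {..<n}"
  then obtain xs where xs: "xs \<in> permutations_of_set {..<n}" "ws = map (unit_coord n) xs" by blast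
  have sx: "set xs = {..<n}" "distinct xs" using xs(1) by (auto simp: permutations_of_set_def)
  have lx: "length xs = n" using distinct_card[OF sx(2)] sx(1) by simp
  have "vsum n ws = ones n" unfolding vsum_ones_iff
  proof (intro allI impI)
    fix m assume m: "m < n"
    have "m \<in> set xs" using sx(1) m by simp
    then obtain j0 where j0: "j0 < n" "xs ! j0 = m" using lx by (auto simp: in_set_conv_nth)
    have "(\<Sum>j<length ws. ws ! j ! m) = (\<Sum>j<n. ws ! j ! m)" using xs(2) lx by simp
    also have "\<dots> = ws ! j0 ! m"
    proof (rule sum1_from_zero[OF j0(1)])
      fix j assume "j < n" "j \<noteq> j0"
      then have "xs ! j \<noteq> m" using nth_eq_iff_index_eq[OF sx(2), of j j0] j0 lx by auto
      moreover have "xs ! j < n" using \<open>j < n\<close> lx sx(1) nth_mem[of j xs] by simp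
      ultimately show "ws ! j ! m = 0" using xs(2) lx \<open>j < n\<close> m by (simp add: unit_coord_nth)
    qed
    also have "\<dots> = 1" using xs(2) lx j0 m by (simp add: unit_coord_nth)
    finally show "(\<Sum>j<length ws. ws ! j ! m) = 1" .
  qed
  moreover have "\<forall>w\<in>set ws. w \<in> bincoords n \<and> w \<noteq> replicate n 0"
    using xs(2) sx(1) unit_coord_bin unit_coord_ne0 by auto
  ultimately show "ws \<in> WW n n" using xs(2) lx by (simp add: WW_def)
qed

lemma part5_sum:
  "(\<Sum>ws\<in>WW n n. \<Prod>w\<leftarrow>ws. entry n w tt) = of_nat (fact n) * (\<Prod>i<n. entry n (unit_coord n i) tt)"
proof -
  let ?P = "permutations_of_set {..<n::nat}"
  have inj: "inj_on (map (unit_coord n)) ?P"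
  proof (rule inj_onI)
    fix xs ys assume a: "xs \<in> ?P" "ys \<in> ?P" "map (unit_coord n) xs = map (unit_coord n) ys"
    have "inj_on (unit_coord n) (set xs \<union> set ys)"
    proof (rule inj_onI)
      fix a b assume ab: "a \<in> set xs \<union> set ys" "b \<in> set xs \<union> set ys" "unit_coord n a = unit_coord n b"
      then have "a < n" "b < n" using a(1,2) by (auto simp: permutations_of_set_def)
      then show "a = b" using arg_cong[OF ab(3), of "\<lambda>w. w ! a"] by (simp add: unit_coord_nth split: if_splits)
    qed
    then show "xs = ys" using a(3) inj_on_map_eq_map by blast
  qed
  have "(\<Sum>ws\<in>WW n n. \<Prod>w\<leftarrow>ws. entry n w tt) = (\<Sum>xs\<in>?P. \<Prod>w\<leftarrow>map (unit_coord n) xs. entry n w tt)"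
    unfolding WW_n_eq by (rule sum.reindex[OF inj, unfolded comp_def])
  also have "\<dots> = (\<Sum>xs\<in>?P. \<Prod>i<n. entry n (unit_coord n i) tt)"
  proof (rule sum.cong[OF refl])
    fix xs assume "xs \<in> ?P"
    then have "set xs = {..<n}" "distinct xs" by (auto simp: permutations_of_set_def)
    then show "(\<Prod>w\<leftarrow>map (unit_coord n) xs. entry n w tt) = (\<Prod>i<n. entry n (unit_coord n i) tt)"
      using prod.distinct_set_conv_list[of xs "\<lambda>i. entry n (unit_coord n i) tt"] by (simp add: comp_def)
  qed
  also have "\<dots> = of_nat (fact n) * (\<Prod>i<n. entry n (unit_coord n i) tt)"
    by simp
  finally show ?thesis .
qed


theorem proposition4p9:
  fixes n :: nat
  assumes "n \<ge> 1"
  shows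
  "(\<forall>v\<in>bincoords n. \<forall>w\<in>bincoords n. \<forall>x y. \<forall>i<n.
       v ! i = 0 \<and> w ! i = 0 \<longrightarrow> sim1 n (entry n v x * entry n w y) 0)
   \<and> (\<forall>v\<in>bincoords n. \<forall>x. v \<noteq> ones n \<longrightarrow> sim1 n (entry n v x) 0)
   \<and> (\<forall>v\<in>bincoords n. \<forall>w\<in>bincoords n. \<forall>x y.
       sim1 n (entry n v x * entry n w y)
         (\<Sum>(v', w')\<in>{(v', w'). v' \<in> bincoords n \<and> w' \<in> bincoords n \<and>
                        list_all2 (\<le>) v' v \<and> list_all2 (\<le>) w' w \<and> map2 (+) v' w' = ones n}.
            entry n v' x * entry n w' y))
   \<and> (\<forall>k\<ge>1. sim1 n (entry n (ones n) ([:0, 1:] ^ k))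
         (\<Sum>ws\<in>{ws. length ws = k \<and> (\<forall>w\<in>set ws. w \<in> bincoords n \<and> w \<noteq> replicate n 0)
                   \<and> vsum n ws = ones n}.
            \<Prod>w\<leftarrow>ws. entry n w [:0, 1:]))
   \<and> sim1 n (entry n (ones n) ([:0, 1:] ^ n))
         (of_nat (fact n) * (\<Prod>i<n. entry n (unit_coord n i) [:0, 1:]))
   \<and> (\<forall>k>n. sim1 n (entry n (ones n) ([:0, 1:] ^ k)) 0)"
proof -
  have c1: "\<forall>v\<in>bincoords n. \<forall>w\<in>bincoords n. \<forall>x y. \<forall>i<n.
       v ! i = 0 \<and> w ! i = 0 \<longrightarrow> sim1 n (entry n v x * entry n w y) 0"
    using part1 by blast
  have c2: "\<forall>v\<in>bincoords n. \<forall>x. v \<noteq> ones n \<longrightarrow> sim1 n (entry n v x) 0"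
    using part1b by blast
  have c3: "\<forall>v\<in>bincoords n. \<forall>w\<in>bincoords n. \<forall>x y.
       sim1 n (entry n v x * entry n w y)
         (\<Sum>(v', w')\<in>{(v', w'). v' \<in> bincoords n \<and> w' \<in> bincoords n \<and>
                        list_all2 (\<le>) v' v \<and> list_all2 (\<le>) w' w \<and> map2 (+) v' w' = ones n}.
            entry n v' x * entry n w' y)"
    using part2 by blast
  have c4: "\<forall>k\<ge>1. sim1 n (entry n (ones n) ([:0, 1:] ^ k))
         (\<Sum>ws\<in>{ws. length ws = k \<and> (\<forall>w\<in>set ws. w \<in> bincoords n \<and> w \<noteq> replicate n 0)
                   \<and> vsum n ws = ones n}.
            \<Prod>w\<leftarrow>ws. entry n w [:0, 1:])"
    using part3[OF assms] unfolding WW_def by blast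
  have c5: "sim1 n (entry n (ones n) ([:0, 1:] ^ n))
         (of_nat (fact n) * (\<Prod>i<n. entry n (unit_coord n i) [:0, 1:]))"
    using part3[OF assms, of n] part5_sum[of n] by simp
  have c6: "\<forall>k>n. sim1 n (entry n (ones n) ([:0, 1:] ^ k)) 0"
  proof (intro allI impI)
    fix k assume "k > n"
    then show "sim1 n (entry n (ones n) ([:0, 1:] ^ k)) 0"
      using part3[OF assms, of k] WW_empty[of n k] by simp
  qed
  show ?thesis using c1 c2 c3 c4 c5 c6 by blast
qed

end
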